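(* Let $q\ge 2$ and $n\ge 3$. If $\mathcal C\subseteq[q]^n$ is a code with insdel distance $d_I(\mathcal C)=2n-2$, then $|\mathcal C|\le \frac{q^2+q}{2}$.
   Context: $[q]=\{1,\dots,q\}$. For $\mathbf u,\mathbf v\in[q]^n$, the insdel distance $d_I(\mathbf u,\mathbf v)$ is the minimum number of insertions and deletions transforming $\mathbf u$ into $\mathbf v$; equivalently $d_I(\mathbf u,\mathbf v)=2n-2\ell_{\rm LCS}(\mathbf u,\mathbf v)$ where $\ell_{\rm LCS}$ is the length of a longest common subsequence. $d_I(\mathcal C)$ is the minimum insdel distance between distinct codewords. *)

theory Defs
  imports Complex_Main "HOL-Library.Sublist"
begin

definition words :: "nat \<Rightarrow> nat \<Rightarrow> nat list set" where
  "words q n = {u. length u = n \<and> set u \<subseteq> {1..q}}"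

definition lcs_len :: "'a list \<Rightarrow> 'a list \<Rightarrow> nat" where
  "lcs_len u v = Max {length w | w. subseq w u \<and> subseq w v}"

definition insdel_dist :: "'a list \<Rightarrow> 'a list \<Rightarrow> nat" where
  "insdel_dist u v = length u + length v - 2 * lcs_len u v"

definition code_insdel_dist :: "'a list set \<Rightarrow> nat" where
  "code_insdel_dist C = Min {insdel_dist u v | u v. u \<in> C \<and> v \<in> C \<and> u \<noteq> v}"

end

theory Submission
  imports Defs
begin

definition gsel :: "nat list \<Rightarrow> bool \<Rightarrow> nat \<times> nat \<times> bool" where
  "gsel u t = (let a = u!0; b = u!1; c = u!2 in
     if a = b then (a,a,t) else if a = c then (a,a,t) else if b = c then (b,b,t)
     else if t then (a,c,False) else (a,b,False))"

lemma gsel_sub: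
  assumes "u = a#b#c#r" "gsel u t = (x,y,s)"
  shows "subseq [x,y] u"
  using assms by (auto simp: gsel_def Let_def split: if_splits)

lemma gsel_in:
  assumes "u = a#b#c#r" "set u \<subseteq> {1..q}" "gsel u t = (x,y,s)"
  shows "(x,y,s) \<in> ({1..q}\<times>{1..q}\<times>{False}) \<union> ((\<lambda>x. (x,x,True)) ` {1..q})"
  using assms by (auto simp: gsel_def Let_def split: if_splits)

lemma gsel_inj1:
  assumes "u = a#b#c#r" "gsel u t = gsel u t'"
  shows "t = t'"
  using assms by (auto simp: gsel_def Let_def split: if_splits)

lemma lcs_ge2:
  assumes "subseq [x,y] u" "subseq [x,y] v"
  shows "lcs_len u v \<ge> 2"
proof -
  have fin: "finite {length w | w. subseq w u \<and> subseq w v}"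
  proof (rule finite_subset[of _ "{0..length u}"])
    show "{length w | w. subseq w u \<and> subseq w v} \<subseteq> {0..length u}"
      by (auto dest: list_emb_length)
  qed auto
  have "length [x,y] \<in> {length w | w. subseq w u \<and> subseq w v}" using assms by blast
  then have "length [x,y] \<le> lcs_len u v" unfolding lcs_len_def using fin by (rule Max_ge[rotated])
  then show ?thesis by simp
qed

theorem lemma3p4:
  fixes q n :: nat and C :: "nat list set"
  assumes "q \<ge> 2" and "n \<ge> 3"
    and "C \<subseteq> words q n"
    and "code_insdel_dist C = 2 * n - 2"
  shows "real (card C) \<le> (real q ^ 2 + real q) / 2"
proof -
  have finW: "finite (words q n)"
    unfolding words_def using finite_lists_length_eq[of "{1..q}" n]
    by (simp add: conj_commute)
  have finC: "finite C" using finW assms(3) finite_subset by blast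
  have dist: "lcs_len u v \<le> 1" if "u \<in> C" "v \<in> C" "u \<noteq> v" for u v
  proof -
    let ?S = "{insdel_dist u v | u v. u \<in> C \<and> v \<in> C \<and> u \<noteq> v}"
    have "?S \<subseteq> (\<lambda>(u,v). insdel_dist u v) ` (C \<times> C)" by auto
    then have "finite ?S" using finC finite_subset by blast
    moreover have "insdel_dist u v \<in> ?S" using that by blast
    ultimately have "Min ?S \<le> insdel_dist u v" by simp
    then have "2*n - 2 \<le> insdel_dist u v" using assms(4) unfolding code_insdel_dist_def by simp
    moreover have "length u = n" "length v = n" using that assms(3) by (auto simp: words_def)
    ultimately show ?thesis using assms(2) unfolding insdel_dist_def by linarith
  qed
  define U where "U = ({1..q}\<times>{1..q}\<times>{False}) \<union> ((\<lambda>x. (x,x,True)) ` {1..q})"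
  have shape: "\<exists>a b c r. u = a#b#c#r" if "u \<in> C" for u
  proof -
    have "length u = n" using that assms(3) by (auto simp: words_def)
    with assms(2) have "length u \<ge> 3" by simp
    then show ?thesis
      by (metis Suc_le_length_iff numeral_3_eq_3)
  qed
  have inj: "inj_on (\<lambda>(u,t). gsel u t) (C \<times> UNIV)"
  proof (rule inj_onI, clarify)
    fix u t v t'
    assume uC: "u \<in> C" and vC: "v \<in> C" and eq: "gsel u t = gsel v t'"
    obtain a b c r where u: "u = a#b#c#r" using shape uC by blast
    obtain a' b' c' r' where v: "v = a'#b'#c'#r'" using shape vC by blast
    obtain x y s where g: "gsel u t = (x,y,s)" by (cases "gsel u t") auto
    have "subseq [x,y] u" using gsel_sub[OF u g] .
    moreover have "subseq [x,y] v" using gsel_sub[OF v] g eq by metis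
    ultimately have "lcs_len u v \<ge> 2" by (rule lcs_ge2)
    then have "u = v" using dist uC vC by fastforce
    then show "u = v \<and> t = t'" using gsel_inj1[OF u] eq by simp
  qed
  have gU: "gsel u t \<in> U" if uC: "u \<in> C" for u t
  proof -
    obtain a b c r where u: "u = a#b#c#r" using shape uC by blast
    have "set u \<subseteq> {1..q}" using uC assms(3) by (auto simp: words_def)
    moreover obtain x y s where g: "gsel u t = (x,y,s)" by (cases "gsel u t") auto
    ultimately show ?thesis unfolding U_def using gsel_in[OF u] by simp
  qed
  have sub: "(\<lambda>(u,t). gsel u t) ` (C \<times> UNIV) \<subseteq> U"
    using gU by auto
  have finU: "finite U" unfolding U_def by auto
  have "card (C \<times> (UNIV::bool set)) \<le> card U"
    using card_inj_on_le[OF inj sub finU] .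
  moreover have "card (C \<times> (UNIV::bool set)) = 2 * card C" by (simp add: card_cartesian_product)
  moreover have "card U \<le> q*q + q"
  proof -
    have "card U \<le> card ({1..q}\<times>{1..q}\<times>{False}) + card ((\<lambda>x. (x,x,True)) ` {1..q})"
      unfolding U_def by (rule card_Un_le)
    also have "\<dots> \<le> q*q + q"
      using card_image_le[of "{1..q}" "\<lambda>x. (x,x,True)"] by (simp add: card_cartesian_product)
    finally show ?thesis .
  qed
  ultimately have "2 * card C \<le> q*q + q" by linarith
  then have "real (2 * card C) \<le> real (q*q + q)" by (simp only: of_nat_le_iff)
  then show ?thesis by (simp add: power2_eq_square)
qed

end
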